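(* Let $w:\mathcal X\to(0,\infty)$ be a weight function and let $\mathbf{x}=(x_1,\dots,x_n)$ be a random point of $\mathcal X^n$ whose marginals are all equal to $\tilde\nu=\tilde w\mu$, with $\tilde w$ a probability density w.r.t. $\mu$ such that $\tilde w\le\beta w$ for a constant $\beta>0$. Let $0<\delta<1$ and $S_\delta=\{\lambda_{\min}(\mathbf G^w)\ge1-\delta\}$, and assume $\mathbb P(S_\delta)>0$. Then for every $f\in L^2_\mu(\mathcal X)$, $$\mathbb E\big(\|\hat P_{V_m}f\|^2\mid S_\delta\big)\le \mathbb P(S_\delta)^{-1}(1-\delta)^{-1}\beta\,\|f\|^2,$$ and $$\mathbb E\big(\|f-\hat P_{V_m}f\|^2\mid S_\delta\big)\le\big(1+\mathbb P(S_\delta)^{-1}(1-\delta)^{-1}\beta\big)\inf_{g\in V_m}\|f-g\|^2.$$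
   Context: $\mathcal X$ is a Polish space with Borel probability measure $\mu$; $\|\cdot\|$ is the $L^2_\mu(\mathcal X)$ norm. $V_m\subset L^2_\mu$ is an $m$-dimensional subspace with $L^2_\mu$-orthonormal basis $\varphi_1,\dots,\varphi_m$ (fixed pointwise representatives), $\boldsymbol\varphi(x)=(\varphi_1(x),\dots,\varphi_m(x))^T$, and $P_{V_m}$ is the $L^2_\mu$-orthogonal projection onto $V_m$. Given points $x_1,\dots,x_n$ and weight $w>0$: empirical semi-norm $\|f\|_n^2=\frac1n\sum_i w(x_i)^{-1}f(x_i)^2$; empirical Gram matrix $\mathbf G^w=\frac1n\sum_i w(x_i)^{-1}\boldsymbol\varphi(x_i)\boldsymbol\varphi(x_i)^T$; when $\mathbf G^w$ is invertible, the weighted least-squares projection $\hat P_{V_m}f$ is the unique minimizer over $g\in V_m$ of $\|f-g\|_n$. $\lambda_{\min}$ denotes the smallest eigenvalue. *)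

theory Defs
  imports "HOL-Probability.Probability"
begin

definition l2norm :: "'a measure \<Rightarrow> ('a \<Rightarrow> real) \<Rightarrow> real" where
  "l2norm \<mu> f = sqrt (\<integral>x. (f x)\<^sup>2 \<partial>\<mu>)"

definition vm_elem :: "('m::finite \<Rightarrow> 'a \<Rightarrow> real) \<Rightarrow> real^'m \<Rightarrow> 'a \<Rightarrow> real" where
  "vm_elem \<phi> c = (\<lambda>x. \<Sum>i\<in>UNIV. c $ i * \<phi> i x)"

definition emp_norm :: "('a \<Rightarrow> real) \<Rightarrow> nat \<Rightarrow> (nat \<Rightarrow> 'a) \<Rightarrow> ('a \<Rightarrow> real) \<Rightarrow> real" where
  "emp_norm w n xs f = sqrt ((1 / real n) * (\<Sum>i<n. (f (xs i))\<^sup>2 / w (xs i)))"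

definition emp_gram :: "('a \<Rightarrow> real) \<Rightarrow> ('m::finite \<Rightarrow> 'a \<Rightarrow> real) \<Rightarrow> nat \<Rightarrow> (nat \<Rightarrow> 'a) \<Rightarrow> real^'m^'m" where
  "emp_gram w \<phi> n xs = (\<chi> j k. (1 / real n) * (\<Sum>i<n. \<phi> j (xs i) * \<phi> k (xs i) / w (xs i)))"

definition lambda_min :: "real^'m^'m \<Rightarrow> real" where
  "lambda_min A = Min {l. \<exists>v. v \<noteq> 0 \<and> A *v v = l *\<^sub>R v}"

text \<open>Weighted least-squares projection: the unique minimizer over V_m of the empirical
  semi-norm distance to f (meaningful when the empirical Gram matrix is invertible).\<close>
definition wls_proj :: "('a \<Rightarrow> real) \<Rightarrow> ('m::finite \<Rightarrow> 'a \<Rightarrow> real) \<Rightarrow> nat \<Rightarrow> (nat \<Rightarrow> 'a)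
    \<Rightarrow> ('a \<Rightarrow> real) \<Rightarrow> 'a \<Rightarrow> real" where
  "wls_proj w \<phi> n xs f = (THE g. (\<exists>c. g = vm_elem \<phi> c) \<and>
      (\<forall>d. emp_norm w n xs (\<lambda>x. f x - g x) \<le> emp_norm w n xs (\<lambda>x. f x - vm_elem \<phi> d x)))"

end

theory Submission
  imports Defs
begin

lemma sym_inner:
  fixes A :: "real^'m^'m"
  assumes sym: "\<And>j k. A$j$k = A$k$j"
  shows "u \<bullet> (A *v v) = v \<bullet> (A *v u)"
proof -
  have "u \<bullet> (A *v v) = (\<Sum>j\<in>UNIV. \<Sum>k\<in>UNIV. u$j * A$j$k * v$k)"
    by (simp add: inner_vec_def matrix_vector_mult_def sum_distrib_left mult.assoc)
  also have "\<dots> = (\<Sum>k\<in>UNIV. \<Sum>j\<in>UNIV. u$j * A$j$k * v$k)"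
    by (rule sum.swap)
  also have "\<dots> = v \<bullet> (A *v u)"
    by (simp add: inner_vec_def matrix_vector_mult_def sum_distrib_left sym mult.commute mult.left_commute)
  finally show ?thesis .
qed

lemma quad_expand:
  fixes A :: "real^'m^'m"
  assumes sym: "\<And>j k. A$j$k = A$k$j"
  shows "(v + t *\<^sub>R u) \<bullet> (A *v (v + t *\<^sub>R u)) = v \<bullet> (A *v v) + 2 * t * (u \<bullet> (A *v v)) + t^2 * (u \<bullet> (A *v u))"
  using sym_inner[OF sym, of v u]
  by (simp add: algebra_simps inner_add_left inner_add_right power2_eq_square)

lemma sym_min_eig:
  fixes A :: "real^'m^'m"
  assumes sym: "\<And>j k. A$j$k = A$k$j"
  shows "\<exists>v m. v \<noteq> 0 \<and> A *v v = m *\<^sub>R v \<and> (\<forall>u. m * (u \<bullet> u) \<le> u \<bullet> (A *v u))"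
proof -
  let ?Q = "\<lambda>u. u \<bullet> (A *v u)"
  have cont: "continuous_on (sphere 0 1) ?Q"
    by (intro continuous_intros matrix_vector_mult_linear_continuous_on)
  have ne: "sphere (0::real^'m) 1 \<noteq> {}"
    using vector_choose_size[of 1] by auto
  obtain v where v: "v \<in> sphere 0 1" and vmin: "\<And>y. y \<in> sphere 0 1 \<Longrightarrow> ?Q v \<le> ?Q y"
    using continuous_attains_inf[OF compact_sphere ne cont] by blast
  define m where "m = ?Q v"
  have nv: "norm v = 1" using v by simp
  have vv: "v \<bullet> v = 1" using nv by (simp add: norm_eq_1)
  have lower: "m * (u \<bullet> u) \<le> ?Q u" for u
  proof (cases "u = 0")
    case True then show ?thesis by simp
  next
    case False
    define y where "y = (1 / norm u) *\<^sub>R u"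
    have "y \<in> sphere 0 1" using False by (simp add: y_def)
    then have "m \<le> ?Q y" using vmin m_def by blast
    also have "?Q y = ?Q u / (norm u)^2"
      by (simp add: y_def matrix_vector_mult_scaleR power2_eq_square divide_simps)
    finally have "m * (norm u)^2 \<le> ?Q u" using False by (simp add: divide_simps)
    then show ?thesis by (simp add: power2_norm_eq_inner)
  qed
  define r where "r = A *v v - m *\<^sub>R v"
  have zero: "u \<bullet> r = 0" for u
  proof -
    define a where "a = u \<bullet> r"
    define b where "b = ?Q u - m * (u \<bullet> u)"
    have b0: "b \<ge> 0" using lower[of u] by (simp add: b_def)
    define t where "t = - a / (b + 1)"
    have "m * ((v + t *\<^sub>R u) \<bullet> (v + t *\<^sub>R u)) \<le> ?Q (v + t *\<^sub>R u)" by (rule lower)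
    also have "\<dots> = m + 2 * t * (u \<bullet> (A *v v)) + t^2 * ?Q u"
      using quad_expand[OF sym] m_def by simp
    finally have "m * (1 + 2 * t * (u \<bullet> v) + t^2 * (u \<bullet> u)) \<le> m + 2 * t * (u \<bullet> (A *v v)) + t^2 * ?Q u"
      using vv by (simp add: inner_add_left inner_add_right inner_commute power2_eq_square algebra_simps)
    then have "0 \<le> 2 * t * a + t^2 * b"
      by (simp add: a_def b_def r_def inner_diff_right algebra_simps power2_eq_square)
    then have "0 \<le> (b+1)^2 * (2 * t * a + t^2 * b)" by simp
    also have "(b+1)^2 * (2 * t * a + t^2 * b) = -(a^2 * (b + 2))"
    proof -
      have bt: "(b+1) * t = -a" using b0 by (simp add: t_def)
      have "(b+1)^2 * (2 * t * a + t^2 * b) = 2 * a * (b+1) * ((b+1) * t) + b * ((b+1)*t)^2"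
        by (simp add: power2_eq_square algebra_simps)
      also have "\<dots> = -(a^2 * (b + 2))" unfolding bt by (simp add: power2_eq_square algebra_simps)
      finally show ?thesis .
    qed
    finally have "a^2 * (b+2) \<le> 0" by simp
    then have "a^2 \<le> 0" using b0 by (metis add_nonneg_pos mult_le_0_iff not_le zero_le_power2 zero_less_numeral)
    then show ?thesis using a_def by simp
  qed
  have "r = 0" using zero[of r] by simp
  then have "A *v v = m *\<^sub>R v" by (simp add: r_def)
  moreover have "v \<noteq> 0" using nv by auto
  ultimately show ?thesis using lower by blast
qed

lemma eig_finite:
  fixes A :: "real^'m^'m"
  assumes sym: "\<And>j k. A$j$k = A$k$j"
  shows "finite {l. \<exists>v. v \<noteq> 0 \<and> A *v v = l *\<^sub>R v}"
proof -
  let ?E = "{l. \<exists>v. v \<noteq> 0 \<and> A *v v = l *\<^sub>R v}"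
  define e where "e l = (SOME v. v \<noteq> 0 \<and> A *v v = l *\<^sub>R v)" for l
  have e: "e l \<noteq> 0 \<and> A *v e l = l *\<^sub>R e l" if "l \<in> ?E" for l
    using that someI_ex[of "\<lambda>v. v \<noteq> 0 \<and> A *v v = l *\<^sub>R v"] unfolding e_def by blast
  have orth: "e l \<bullet> e k = 0" if "l \<in> ?E" "k \<in> ?E" "l \<noteq> k" for l k
  proof -
    have "e l \<bullet> (A *v e k) = e k \<bullet> (A *v e l)" by (rule sym_inner[OF sym])
    then have "k * (e l \<bullet> e k) = l * (e l \<bullet> e k)"
      using e[OF that(1)] e[OF that(2)] by (simp add: inner_commute)
    then show ?thesis using that(3) by simp
  qed
  have inj: "inj_on e ?E"
  proof (rule inj_onI)
    fix l k assume "l \<in> ?E" "k \<in> ?E" "e l = e k"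
    then show "l = k"
    proof (rule_tac ccontr)
      assume "l \<noteq> k"
      then have "e l \<bullet> e l = 0" using orth[of l k] \<open>l \<in> ?E\<close> \<open>k \<in> ?E\<close> \<open>e l = e k\<close> by simp
      then show False using e[OF \<open>l \<in> ?E\<close>] by simp
    qed
  qed
  have "pairwise orthogonal (e ` ?E)"
    unfolding pairwise_def orthogonal_def using orth by auto
  moreover have "0 \<notin> e ` ?E" using e by (metis (no_types, lifting) imageE)
  ultimately have "independent (e ` ?E)" by (rule pairwise_orthogonal_independent)
  then have "finite (e ` ?E)" using independent_bound by blast
  then show ?thesis using inj finite_imageD by blast
qed

lemma lambda_min_quad:
  fixes A :: "real^'m^'m"
  assumes sym: "\<And>j k. A$j$k = A$k$j"
  shows "Min {l. \<exists>v. v \<noteq> 0 \<and> A *v v = l *\<^sub>R v} * (u \<bullet> u) \<le> u \<bullet> (A *v u)"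
proof -
  obtain v m where vm: "v \<noteq> 0" "A *v v = m *\<^sub>R v" "\<forall>u. m * (u \<bullet> u) \<le> u \<bullet> (A *v u)"
    using sym_min_eig[OF sym] by blast
  have "Min {l. \<exists>v. v \<noteq> 0 \<and> A *v v = l *\<^sub>R v} \<le> m"
    using eig_finite[OF sym] vm by (intro Min_le) auto
  then have "Min {l. \<exists>v. v \<noteq> 0 \<and> A *v v = l *\<^sub>R v} * (u \<bullet> u) \<le> m * (u \<bullet> u)"
    by (simp add: mult_right_mono)
  then show ?thesis using vm(3) by (meson order_trans)
qed

definition ip :: "('a \<Rightarrow> real) \<Rightarrow> nat \<Rightarrow> (nat \<Rightarrow> 'a) \<Rightarrow> ('a \<Rightarrow> real) \<Rightarrow> ('a \<Rightarrow> real) \<Rightarrow> real" where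
  "ip w n p u v = (1 / real n) * (\<Sum>i<n. u (p i) * v (p i) / w (p i))"

definition bvec :: "('a \<Rightarrow> real) \<Rightarrow> ('m::finite \<Rightarrow> 'a \<Rightarrow> real) \<Rightarrow> nat \<Rightarrow> (nat \<Rightarrow> 'a) \<Rightarrow> ('a \<Rightarrow> real) \<Rightarrow> real^'m" where
  "bvec w \<phi> n p h = (\<chi> j. ip w n p (\<phi> j) h)"

lemma emp_norm_ip: "emp_norm w n p u = sqrt (ip w n p u u)"
  by (simp add: emp_norm_def ip_def power2_eq_square)

lemma ip_sym: "ip w n p u v = ip w n p v u"
  by (simp add: ip_def mult.commute)

lemma ip_nonneg: "(\<And>x. w x > 0) \<Longrightarrow> ip w n p u u \<ge> 0"
  unfolding ip_def by (rule mult_nonneg_nonneg) (auto intro!: sum_nonneg divide_nonneg_pos)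

lemma ip_diff_left: "ip w n p (\<lambda>x. u x - v x) z = ip w n p u z - ip w n p v z"
  by (simp add: ip_def diff_divide_distrib left_diff_distrib sum_subtractf right_diff_distrib)

lemma ip_diff_right: "ip w n p z (\<lambda>x. u x - v x) = ip w n p z u - ip w n p z v"
  by (simp add: ip_sym[of w n p z] ip_diff_left)

lemma ip_vm_left: "ip w n p (vm_elem \<phi> c) z = (\<Sum>j\<in>UNIV. c $ j * ip w n p (\<phi> j) z)"
proof -
  have "ip w n p (vm_elem \<phi> c) z = (1 / real n) * (\<Sum>i<n. \<Sum>j\<in>UNIV. c $ j * (\<phi> j (p i) * z (p i) / w (p i)))"
    by (simp add: ip_def vm_elem_def sum_distrib_right sum_divide_distrib mult.assoc)
  also have "\<dots> = (1 / real n) * (\<Sum>j\<in>UNIV. \<Sum>i<n. c $ j * (\<phi> j (p i) * z (p i) / w (p i)))"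
    by (subst sum.swap) simp
  also have "\<dots> = (\<Sum>j\<in>UNIV. c $ j * ip w n p (\<phi> j) z)"
    by (simp add: ip_def sum_distrib_left[symmetric] sum_distrib_left mult.commute mult.left_commute)
  finally show ?thesis .
qed

lemma vm_diff: "vm_elem \<phi> (a - b) x = vm_elem \<phi> a x - vm_elem \<phi> b x"
  by (simp add: vm_elem_def sum_subtractf algebra_simps)

lemma gram_entry: "emp_gram w \<phi> n p $ j $ k = ip w n p (\<phi> j) (\<phi> k)"
  by (simp add: emp_gram_def ip_def)

lemma gram_sym: "emp_gram w \<phi> n p $ j $ k = emp_gram w \<phi> n p $ k $ j"
  by (simp add: gram_entry ip_sym)

lemma gram_mult: "emp_gram w \<phi> n p *v c = bvec w \<phi> n p (vm_elem \<phi> c)"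
proof -
  have "(emp_gram w \<phi> n p *v c)$i = bvec w \<phi> n p (vm_elem \<phi> c) $ i" for i
  proof -
    have "(emp_gram w \<phi> n p *v c)$i = (\<Sum>j\<in>UNIV. ip w n p (\<phi> i) (\<phi> j) * c$j)"
      by (simp add: matrix_vector_mult_def gram_entry)
    also have "\<dots> = (\<Sum>j\<in>UNIV. c$j * ip w n p (\<phi> j) (\<phi> i))"
      by (intro sum.cong refl) (simp add: mult.commute ip_sym[of w n p "\<phi> i"])
    also have "\<dots> = ip w n p (vm_elem \<phi> c) (\<phi> i)" by (simp add: ip_vm_left)
    also have "\<dots> = bvec w \<phi> n p (vm_elem \<phi> c) $ i" by (simp add: bvec_def ip_sym[of w n p "\<phi> i"])
    finally show ?thesis .
  qed
  then show ?thesis by (simp add: vec_eq_iff)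
qed

lemma inner_bvec: "d \<bullet> bvec w \<phi> n p h = ip w n p (vm_elem \<phi> d) h"
  by (simp add: bvec_def inner_vec_def ip_vm_left)

lemma bvec_diff: "bvec w \<phi> n p (\<lambda>x. u x - v x) = bvec w \<phi> n p u - bvec w \<phi> n p v"
  by (simp add: bvec_def vec_eq_iff ip_diff_right)

lemma quad_gram: "d \<bullet> (emp_gram w \<phi> n p *v c) = ip w n p (vm_elem \<phi> d) (vm_elem \<phi> c)"
  by (simp add: gram_mult inner_bvec)

lemma ip_expand: "ip w n p (\<lambda>x. u x - v x) (\<lambda>x. u x - v x) = ip w n p u u - 2 * ip w n p u v + ip w n p v v"
proof -
  have "ip w n p (\<lambda>x. u x - v x) (\<lambda>x. u x - v x) = ip w n p u (\<lambda>x. u x - v x) - ip w n p v (\<lambda>x. u x - v x)"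
    by (rule ip_diff_left)
  also have "\<dots> = (ip w n p u u - ip w n p u v) - (ip w n p v u - ip w n p v v)"
    by (simp only: ip_diff_right)
  finally show ?thesis using ip_sym[of w n p v u] by simp
qed

lemma wls_char:
  fixes \<phi> :: "'m::finite \<Rightarrow> 'a \<Rightarrow> real"
  assumes wpos: "\<And>x. w x > 0"
    and pd: "\<And>c. c \<noteq> 0 \<Longrightarrow> c \<bullet> (emp_gram w \<phi> n p *v c) > 0"
    and sol: "emp_gram w \<phi> n p *v c = bvec w \<phi> n p h"
  shows "wls_proj w \<phi> n p h = vm_elem \<phi> c"
proof -
  let ?G = "emp_gram w \<phi> n p"
  let ?F = "\<lambda>d. ip w n p (\<lambda>x. h x - vm_elem \<phi> d x) (\<lambda>x. h x - vm_elem \<phi> d x)"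
  define r where "r = (\<lambda>x. h x - vm_elem \<phi> c x)"
  have orth: "ip w n p (vm_elem \<phi> e) r = 0" for e
  proof -
    have "ip w n p (vm_elem \<phi> e) r = e \<bullet> bvec w \<phi> n p h - e \<bullet> (?G *v c)"
      by (simp add: r_def ip_diff_right inner_bvec quad_gram)
    then show ?thesis using sol by simp
  qed
  have Fd: "?F d = ?F c + (d - c) \<bullet> (?G *v (d - c))" for d
  proof -
    have eq: "(\<lambda>x. h x - vm_elem \<phi> d x) = (\<lambda>x. r x - vm_elem \<phi> (d - c) x)"
      by (simp add: r_def vm_diff)
    have "?F d = ip w n p r r - 2 * ip w n p r (vm_elem \<phi> (d - c)) + ip w n p (vm_elem \<phi> (d-c)) (vm_elem \<phi> (d-c))"
      unfolding eq by (rule ip_expand)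
    also have "\<dots> = ?F c + (d - c) \<bullet> (?G *v (d - c))"
    proof -
      have "ip w n p r (vm_elem \<phi> (d - c)) = 0" using orth[of "d - c"] ip_sym[of w n p r "vm_elem \<phi> (d - c)"] by simp
      moreover have "?F c = ip w n p r r" by (simp add: r_def)
      ultimately show ?thesis by (simp add: quad_gram)
    qed
    finally show ?thesis .
  qed
  show ?thesis unfolding wls_proj_def
  proof (rule the_equality)
    show "(\<exists>c'. vm_elem \<phi> c = vm_elem \<phi> c') \<and> (\<forall>d. emp_norm w n p (\<lambda>x. h x - vm_elem \<phi> c x) \<le> emp_norm w n p (\<lambda>x. h x - vm_elem \<phi> d x))"
    proof (intro conjI allI exI)
      fix d
      have "0 \<le> (d - c) \<bullet> (?G *v (d - c))" using pd[of "d - c"] by (cases "d - c = 0") auto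
      then have "?F c \<le> ?F d" using Fd[of d] by simp
      then show "emp_norm w n p (\<lambda>x. h x - vm_elem \<phi> c x) \<le> emp_norm w n p (\<lambda>x. h x - vm_elem \<phi> d x)"
        by (simp add: emp_norm_ip)
    qed simp
  next
    fix g assume g: "(\<exists>c'. g = vm_elem \<phi> c') \<and> (\<forall>d. emp_norm w n p (\<lambda>x. h x - g x) \<le> emp_norm w n p (\<lambda>x. h x - vm_elem \<phi> d x))"
    then obtain d where d: "g = vm_elem \<phi> d" by blast
    have "emp_norm w n p (\<lambda>x. h x - vm_elem \<phi> d x) \<le> emp_norm w n p (\<lambda>x. h x - vm_elem \<phi> c x)"
      using conjunct2[OF g, rule_format, of c] d by simp
    then have "?F d \<le> ?F c" using ip_nonneg[OF wpos] by (simp add: emp_norm_ip)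
    then have "(d - c) \<bullet> (?G *v (d - c)) \<le> 0" using Fd[of d] by simp
    then have "d - c = 0" using pd[of "d - c"] by force
    then show "g = vm_elem \<phi> c" using d by simp
  qed
qed

lemma sol_bound:
  assumes wpos: "\<And>x. w x > 0"
    and sol: "emp_gram w \<phi> n p *v c = bvec w \<phi> n p h"
  shows "c \<bullet> (emp_gram w \<phi> n p *v c) \<le> ip w n p h h"
proof -
  let ?v = "vm_elem \<phi> c"
  have a: "c \<bullet> (emp_gram w \<phi> n p *v c) = ip w n p ?v h"
    using sol by (simp add: inner_bvec)
  have b: "c \<bullet> (emp_gram w \<phi> n p *v c) = ip w n p ?v ?v" by (simp add: quad_gram)
  have "0 \<le> ip w n p (\<lambda>x. h x - ?v x) (\<lambda>x. h x - ?v x)" by (rule ip_nonneg[OF wpos])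
  also have "\<dots> = ip w n p h h - 2 * ip w n p h ?v + ip w n p ?v ?v" by (rule ip_expand)
  finally show ?thesis using a b ip_sym[of w n p h ?v] by simp
qed

lemma sol_exists:
  fixes \<phi> :: "'m::finite \<Rightarrow> 'a \<Rightarrow> real"
  assumes pd: "\<And>c. c \<noteq> 0 \<Longrightarrow> c \<bullet> (emp_gram w \<phi> n p *v c) > 0"
  shows "\<exists>c. emp_gram w \<phi> n p *v c = b"
proof -
  let ?G = "emp_gram w \<phi> n p"
  have "inj ((*v) ?G)"
  proof (rule linear_injective_0[THEN iffD2, OF matrix_vector_mul_linear], intro allI impI)
    fix c assume "?G *v c = 0"
    then show "c = 0" using pd[of c] by auto
  qed
  then have "surj ((*v) ?G)" using linear_injective_imp_surjective[OF matrix_vector_mul_linear] by blast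
  then show ?thesis by (metis surjD)
qed


lemma abs_mult_le_sq: "\<bar>a * b\<bar> \<le> a\<^sup>2 + b\<^sup>2" for a b :: real
proof -
  have "0 \<le> (\<bar>a\<bar> - \<bar>b\<bar>)\<^sup>2" by simp
  then have "2 * (\<bar>a\<bar> * \<bar>b\<bar>) \<le> \<bar>a\<bar>\<^sup>2 + \<bar>b\<bar>\<^sup>2" by (simp add: power2_diff)
  moreover have "0 \<le> \<bar>a\<bar> * \<bar>b\<bar>" by simp
  moreover have "\<bar>a\<bar>\<^sup>2 = a\<^sup>2" "\<bar>b\<bar>\<^sup>2 = b\<^sup>2" by simp_all
  ultimately have "\<bar>a\<bar> * \<bar>b\<bar> \<le> a\<^sup>2 + b\<^sup>2" by linarith
  then show ?thesis by (simp add: abs_mult)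
qed

lemma L2_prod:
  fixes u v :: "'a \<Rightarrow> real"
  assumes "u \<in> borel_measurable \<mu>" "v \<in> borel_measurable \<mu>"
    "integrable \<mu> (\<lambda>x. (u x)\<^sup>2)" "integrable \<mu> (\<lambda>x. (v x)\<^sup>2)"
  shows "integrable \<mu> (\<lambda>x. u x * v x)"
proof (rule Bochner_Integration.integrable_bound[where f="\<lambda>x. (u x)\<^sup>2 + (v x)\<^sup>2"])
  show "integrable \<mu> (\<lambda>x. (u x)\<^sup>2 + (v x)\<^sup>2)" using assms by simp
  show "(\<lambda>x. u x * v x) \<in> borel_measurable \<mu>" using assms by simp
  show "AE x in \<mu>. norm (u x * v x) \<le> norm ((u x)\<^sup>2 + (v x)\<^sup>2)"
    using abs_mult_le_sq by simp
qed

lemma vm_meas: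
  assumes "\<And>i. \<phi> i \<in> borel_measurable \<mu>"
  shows "vm_elem \<phi> c \<in> borel_measurable \<mu>"
  unfolding vm_elem_def using assms by measurable

lemma L2_identity:
  fixes \<phi> :: "'m::finite \<Rightarrow> 'a \<Rightarrow> real"
  assumes phi_meas: "\<And>i. \<phi> i \<in> borel_measurable \<mu>"
    and phi_L2: "\<And>i. integrable \<mu> (\<lambda>x. (\<phi> i x)\<^sup>2)"
    and phi_orth: "\<And>i j. (\<integral>x. \<phi> i x * \<phi> j x \<partial>\<mu>) = (if i = j then 1 else 0)"
    and u_meas: "u \<in> borel_measurable \<mu>"
    and u_L2: "integrable \<mu> (\<lambda>x. (u x)\<^sup>2)"
    and u_orth: "\<And>j. (\<integral>x. u x * \<phi> j x \<partial>\<mu>) = 0"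
  shows "(\<integral>x. (u x - vm_elem \<phi> e x)\<^sup>2 \<partial>\<mu>) = (\<integral>x. (u x)\<^sup>2 \<partial>\<mu>) + e \<bullet> e"
proof -
  have pt: "(u x - vm_elem \<phi> e x)\<^sup>2 = (u x)\<^sup>2 - 2 * (\<Sum>j\<in>UNIV. e$j * (u x * \<phi> j x))
      + (\<Sum>j\<in>UNIV. \<Sum>k\<in>UNIV. e$j * e$k * (\<phi> j x * \<phi> k x))" for x
  proof -
    have a: "u x * vm_elem \<phi> e x = (\<Sum>j\<in>UNIV. e$j * (u x * \<phi> j x))"
      by (simp add: vm_elem_def sum_distrib_left mult.commute mult.left_commute)
    have b: "vm_elem \<phi> e x * vm_elem \<phi> e x = (\<Sum>j\<in>UNIV. \<Sum>k\<in>UNIV. e$j * e$k * (\<phi> j x * \<phi> k x))"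
      by (simp add: vm_elem_def sum_product mult.commute mult.left_commute)
    have "(u x - vm_elem \<phi> e x)\<^sup>2 = (u x)\<^sup>2 - 2 * (u x * vm_elem \<phi> e x) + vm_elem \<phi> e x * vm_elem \<phi> e x"
      by (simp add: power2_eq_square algebra_simps)
    then show ?thesis by (simp only: a b)
  qed
  have i1: "integrable \<mu> (\<lambda>x. \<Sum>j\<in>UNIV. e$j * (u x * \<phi> j x))"
    by (auto intro!: integrable_sum integrable_mult_right L2_prod u_meas phi_meas u_L2 phi_L2)
  have i2: "integrable \<mu> (\<lambda>x. \<Sum>j\<in>UNIV. \<Sum>k\<in>UNIV. e$j * e$k * (\<phi> j x * \<phi> k x))"
    by (auto intro!: integrable_sum integrable_mult_right L2_prod phi_meas phi_L2)
  have "(\<integral>x. (u x - vm_elem \<phi> e x)\<^sup>2 \<partial>\<mu>) = (\<integral>x. (u x)\<^sup>2 - 2 * (\<Sum>j\<in>UNIV. e$j * (u x * \<phi> j x))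
      + (\<Sum>j\<in>UNIV. \<Sum>k\<in>UNIV. e$j * e$k * (\<phi> j x * \<phi> k x)) \<partial>\<mu>)"
    by (simp add: pt)
  also have "\<dots> = (\<integral>x. (u x)\<^sup>2 \<partial>\<mu>) - 2 * (\<integral>x. (\<Sum>j\<in>UNIV. e$j * (u x * \<phi> j x)) \<partial>\<mu>)
      + (\<integral>x. (\<Sum>j\<in>UNIV. \<Sum>k\<in>UNIV. e$j * e$k * (\<phi> j x * \<phi> k x)) \<partial>\<mu>)"
    using u_L2 i1 i2 by simp
  also have "(\<integral>x. (\<Sum>j\<in>UNIV. e$j * (u x * \<phi> j x)) \<partial>\<mu>) = 0"
    using L2_prod[OF u_meas phi_meas u_L2 phi_L2] by (subst Bochner_Integration.integral_sum) (auto simp: u_orth)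
  also have "(\<integral>x. (\<Sum>j\<in>UNIV. \<Sum>k\<in>UNIV. e$j * e$k * (\<phi> j x * \<phi> k x)) \<partial>\<mu>) = (\<Sum>j\<in>UNIV. \<Sum>k\<in>UNIV. e$j * e$k * (if j = k then 1 else 0))"
    using L2_prod[OF phi_meas phi_meas phi_L2 phi_L2]
    by (subst Bochner_Integration.integral_sum, force intro: integrable_sum)+ (simp add: phi_orth)
  also have "\<dots> = e \<bullet> e"
    by (simp add: inner_vec_def if_distrib cong: if_cong)
  finally show ?thesis by simp
qed

lemma l2norm_sq: "(l2norm \<mu> f)\<^sup>2 = (\<integral>x. (f x)\<^sup>2 \<partial>\<mu>)"
  by (simp add: l2norm_def)

lemma E_ip:
  fixes xs :: "'w \<Rightarrow> nat \<Rightarrow> 'a"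
  assumes w_meas: "w \<in> borel_measurable \<mu>"
    and w_pos: "\<And>x. w x > 0"
    and xs_meas: "\<And>i. i < n \<Longrightarrow> (\<lambda>\<omega>. xs \<omega> i) \<in> measurable M \<mu>"
    and wt_meas: "wt \<in> borel_measurable \<mu>"
    and wt_nonneg: "\<And>x. wt x \<ge> 0"
    and marginals: "\<And>i. i < n \<Longrightarrow> distr M \<mu> (\<lambda>\<omega>. xs \<omega> i) = density \<mu> (\<lambda>x. ennreal (wt x))"
    and beta_pos: "\<beta> > 0"
    and wt_le: "\<And>x. wt x \<le> \<beta> * w x"
    and h_meas: "h \<in> borel_measurable \<mu>"
    and h_L2: "integrable \<mu> (\<lambda>x. (h x)\<^sup>2)"
  shows "(\<integral>\<^sup>+\<omega>. ennreal (ip w n (xs \<omega>) h h) \<partial>M) \<le> ennreal (\<beta> * (\<integral>x. (h x)\<^sup>2 \<partial>\<mu>))"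
proof -
  define q where "q x = h x * h x / w x" for x
  have q_meas: "q \<in> borel_measurable \<mu>" unfolding q_def using h_meas w_meas by measurable
  have q_nn: "q x \<ge> 0" for x unfolding q_def using w_pos[of x] by simp
  define B where "B = \<beta> * (\<integral>x. (h x)\<^sup>2 \<partial>\<mu>)"
  have B_nn: "B \<ge> 0" unfolding B_def using beta_pos by simp
  have term_bd: "(\<integral>\<^sup>+\<omega>. ennreal (q (xs \<omega> i)) \<partial>M) \<le> ennreal B" if i: "i < n" for i
  proof -
    have "(\<integral>\<^sup>+\<omega>. ennreal (q (xs \<omega> i)) \<partial>M) = (\<integral>\<^sup>+x. ennreal (q x) \<partial>distr M \<mu> (\<lambda>\<omega>. xs \<omega> i))"
      using xs_meas[OF i] q_meas by (subst nn_integral_distr) auto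
    also have "\<dots> = (\<integral>\<^sup>+x. ennreal (q x) \<partial>density \<mu> (\<lambda>x. ennreal (wt x)))"
      using marginals[OF i] by simp
    also have "\<dots> = (\<integral>\<^sup>+x. ennreal (wt x) * ennreal (q x) \<partial>\<mu>)"
      using wt_meas q_meas by (subst nn_integral_density) auto
    also have "\<dots> \<le> (\<integral>\<^sup>+x. ennreal \<beta> * ennreal ((h x)\<^sup>2) \<partial>\<mu>)"
    proof (rule nn_integral_mono)
      fix x
      have "wt x * q x \<le> \<beta> * w x * q x" using wt_le[of x] q_nn[of x] by (simp add: mult_right_mono)
      also have "\<beta> * w x * q x = \<beta> * (h x)\<^sup>2" using w_pos[of x] by (simp add: q_def power2_eq_square)
      finally have "wt x * q x \<le> \<beta> * (h x)\<^sup>2" .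
      then show "ennreal (wt x) * ennreal (q x) \<le> ennreal \<beta> * ennreal ((h x)\<^sup>2)"
        using q_nn[of x] beta_pos wt_nonneg[of x] by (simp add: ennreal_mult[symmetric] ennreal_leI)
    qed
    also have "\<dots> = ennreal \<beta> * (\<integral>\<^sup>+x. ennreal ((h x)\<^sup>2) \<partial>\<mu>)"
      using h_meas by (subst nn_integral_cmult) auto
    also have "\<dots> = ennreal \<beta> * ennreal (\<integral>x. (h x)\<^sup>2 \<partial>\<mu>)"
      using h_L2 by (subst nn_integral_eq_integral) auto
    also have "\<dots> = ennreal B" unfolding B_def using beta_pos by (simp add: ennreal_mult)
    finally show ?thesis .
  qed
  have "(\<integral>\<^sup>+\<omega>. ennreal (ip w n (xs \<omega>) h h) \<partial>M) = (\<integral>\<^sup>+\<omega>. ennreal (1 / real n) * (\<Sum>i<n. ennreal (q (xs \<omega> i))) \<partial>M)"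
    by (intro nn_integral_cong) (simp add: ip_def q_def[symmetric] ennreal_mult[symmetric] sum_ennreal q_nn sum_nonneg)
  also have "\<dots> = ennreal (1 / real n) * (\<Sum>i<n. \<integral>\<^sup>+\<omega>. ennreal (q (xs \<omega> i)) \<partial>M)"
  proof -
    have m: "\<And>i. i \<in> {..<n} \<Longrightarrow> (\<lambda>\<omega>. ennreal (q (xs \<omega> i))) \<in> borel_measurable M"
      using xs_meas q_meas by (auto intro: measurable_compose)
    have "(\<lambda>\<omega>. \<Sum>i<n. ennreal (q (xs \<omega> i))) \<in> borel_measurable M"
      using m by (intro borel_measurable_sum) auto
    moreover have "(\<integral>\<^sup>+\<omega>. (\<Sum>i<n. ennreal (q (xs \<omega> i))) \<partial>M) = (\<Sum>i<n. \<integral>\<^sup>+\<omega>. ennreal (q (xs \<omega> i)) \<partial>M)"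
      by (rule nn_integral_sum) (use m in auto)
    ultimately show ?thesis by (simp add: nn_integral_cmult)
  qed
  also have "\<dots> \<le> ennreal (1 / real n) * (\<Sum>i<n. ennreal B)"
    using term_bd by (intro mult_left_mono sum_mono) auto
  also have "\<dots> = ennreal ((1 / real n) * (real n * B))"
    using B_nn by (simp add: ennreal_mult[symmetric] ennreal_of_nat_eq_real_of_nat)
  also have "\<dots> \<le> ennreal B"
    by (intro ennreal_leI) (cases "n = 0", auto simp: B_nn)
  finally show ?thesis unfolding B_def .
qed


lemma vm_L2:
  fixes \<phi> :: "'m::finite \<Rightarrow> 'a \<Rightarrow> real"
  assumes phi_meas: "\<And>i. \<phi> i \<in> borel_measurable \<mu>"
    and phi_L2: "\<And>i. integrable \<mu> (\<lambda>x. (\<phi> i x)\<^sup>2)"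
  shows "integrable \<mu> (\<lambda>x. (vm_elem \<phi> c x)\<^sup>2)"
proof -
  have "(\<lambda>x. (vm_elem \<phi> c x)\<^sup>2) = (\<lambda>x. \<Sum>j\<in>UNIV. \<Sum>k\<in>UNIV. c$j * c$k * (\<phi> j x * \<phi> k x))"
    by (simp add: vm_elem_def power2_eq_square sum_product mult.commute mult.left_commute)
  moreover have "integrable \<mu> (\<lambda>x. \<Sum>j\<in>UNIV. \<Sum>k\<in>UNIV. c$j * c$k * (\<phi> j x * \<phi> k x))"
    by (auto intro!: integrable_sum integrable_mult_right L2_prod phi_meas phi_L2)
  ultimately show ?thesis by simp
qed

lemma diff_L2:
  fixes a b :: "'a \<Rightarrow> real"
  assumes "a \<in> borel_measurable \<mu>" "b \<in> borel_measurable \<mu>"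
    "integrable \<mu> (\<lambda>x. (a x)\<^sup>2)" "integrable \<mu> (\<lambda>x. (b x)\<^sup>2)"
  shows "integrable \<mu> (\<lambda>x. (a x - b x)\<^sup>2)"
proof -
  have "(\<lambda>x. (a x - b x)\<^sup>2) = (\<lambda>x. (a x)\<^sup>2 - 2 * (a x * b x) + (b x)\<^sup>2)"
    by (simp add: power2_diff algebra_simps)
  moreover have "integrable \<mu> (\<lambda>x. (a x)\<^sup>2 - 2 * (a x * b x) + (b x)\<^sup>2)"
    using assms L2_prod[OF assms] by auto
  ultimately show ?thesis by simp
qed

lemma ip_meas:
  fixes xs :: "'w \<Rightarrow> nat \<Rightarrow> 'a"
  assumes w_meas: "w \<in> borel_measurable \<mu>"
    and xs_meas: "\<And>i. i < n \<Longrightarrow> (\<lambda>\<omega>. xs \<omega> i) \<in> measurable M \<mu>"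
    and h_meas: "h \<in> borel_measurable \<mu>"
  shows "(\<lambda>\<omega>. ip w n (xs \<omega>) h h) \<in> borel_measurable M"
proof -
  define q where "q x = h x * h x / w x" for x
  have q_meas: "q \<in> borel_measurable \<mu>" unfolding q_def using h_meas w_meas by measurable
  have m: "\<And>i. i \<in> {..<n} \<Longrightarrow> (\<lambda>\<omega>. q (xs \<omega> i)) \<in> borel_measurable M"
    using xs_meas q_meas by (auto intro: measurable_compose)
  have "(\<lambda>\<omega>. (1 / real n) * (\<Sum>i<n. q (xs \<omega> i))) \<in> borel_measurable M"
    using m by (intro borel_measurable_times borel_measurable_const borel_measurable_sum) auto
  then show ?thesis by (simp add: ip_def q_def)
qed

lemma l2_vm:
  fixes \<phi> :: "'m::finite \<Rightarrow> 'a \<Rightarrow> real"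
  assumes phi_meas: "\<And>i. \<phi> i \<in> borel_measurable \<mu>"
    and phi_L2: "\<And>i. integrable \<mu> (\<lambda>x. (\<phi> i x)\<^sup>2)"
    and phi_orth: "\<And>i j. (\<integral>x. \<phi> i x * \<phi> j x \<partial>\<mu>) = (if i = j then 1 else 0)"
  shows "(l2norm \<mu> (vm_elem \<phi> c))\<^sup>2 = c \<bullet> c"
proof -
  have "(\<integral>x. ((\<lambda>x. 0) x - vm_elem \<phi> c x)\<^sup>2 \<partial>\<mu>) = (\<integral>x. ((\<lambda>x. 0::real) x)\<^sup>2 \<partial>\<mu>) + c \<bullet> c"
    by (rule L2_identity[OF phi_meas phi_L2 phi_orth]) auto
  then show ?thesis by (simp add: l2norm_sq)
qed

theorem mainTheorem2:
  fixes \<mu> :: "'a::polish_space measure"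
    and \<phi> :: "'m::finite \<Rightarrow> 'a \<Rightarrow> real"
    and w wt f :: "'a \<Rightarrow> real"
    and M :: "'w measure"
    and xs :: "'w \<Rightarrow> nat \<Rightarrow> 'a"
    and n :: nat
    and \<beta> \<delta> :: real
  assumes mu_borel: "sets \<mu> = sets borel"
    and mu_prob: "prob_space \<mu>"
    and phi_meas: "\<And>i. \<phi> i \<in> borel_measurable \<mu>"
    and phi_L2: "\<And>i. integrable \<mu> (\<lambda>x. (\<phi> i x)\<^sup>2)"
    and phi_orth: "\<And>i j. (\<integral>x. \<phi> i x * \<phi> j x \<partial>\<mu>) = (if i = j then 1 else 0)"
    and w_meas: "w \<in> borel_measurable \<mu>"
    and w_pos: "\<And>x. w x > 0"
    and M_prob: "prob_space M"
    and xs_meas: "\<And>i. i < n \<Longrightarrow> (\<lambda>\<omega>. xs \<omega> i) \<in> measurable M \<mu>"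
    and wt_meas: "wt \<in> borel_measurable \<mu>"
    and wt_nonneg: "\<And>x. wt x \<ge> 0"
    and wt_dens: "(\<integral>x. wt x \<partial>\<mu>) = 1"
    and marginals: "\<And>i. i < n \<Longrightarrow> distr M \<mu> (\<lambda>\<omega>. xs \<omega> i) = density \<mu> (\<lambda>x. ennreal (wt x))"
    and beta_pos: "\<beta> > 0"
    and wt_le: "\<And>x. wt x \<le> \<beta> * w x"
    and delta: "0 < \<delta>" "\<delta> < 1"
    and S_pos: "measure M {\<omega> \<in> space M. lambda_min (emp_gram w \<phi> n (xs \<omega>)) \<ge> 1 - \<delta>} > 0"
    and f_meas: "f \<in> borel_measurable \<mu>"
    and f_L2: "integrable \<mu> (\<lambda>x. (f x)\<^sup>2)"
  shows "((\<integral>\<^sup>+\<omega>\<in>{\<omega> \<in> space M. lambda_min (emp_gram w \<phi> n (xs \<omega>)) \<ge> 1 - \<delta>}. ennreal ((l2norm \<mu> (wls_proj w \<phi> n (xs \<omega>) f))\<^sup>2) \<partial>M)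
             / ennreal (measure M {\<omega> \<in> space M. lambda_min (emp_gram w \<phi> n (xs \<omega>)) \<ge> 1 - \<delta>})
           \<le> ennreal (inverse (measure M {\<omega> \<in> space M. lambda_min (emp_gram w \<phi> n (xs \<omega>)) \<ge> 1 - \<delta>}) * inverse (1 - \<delta>) * \<beta> * (l2norm \<mu> f)\<^sup>2))
       \<and> ((\<integral>\<^sup>+\<omega>\<in>{\<omega> \<in> space M. lambda_min (emp_gram w \<phi> n (xs \<omega>)) \<ge> 1 - \<delta>}. ennreal ((l2norm \<mu> (\<lambda>x. f x - wls_proj w \<phi> n (xs \<omega>) f x))\<^sup>2) \<partial>M)
             / ennreal (measure M {\<omega> \<in> space M. lambda_min (emp_gram w \<phi> n (xs \<omega>)) \<ge> 1 - \<delta>})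
           \<le> ennreal ((1 + inverse (measure M {\<omega> \<in> space M. lambda_min (emp_gram w \<phi> n (xs \<omega>)) \<ge> 1 - \<delta>}) * inverse (1 - \<delta>) * \<beta>)
                      * (INF c. (l2norm \<mu> (\<lambda>x. f x - vm_elem \<phi> c x))\<^sup>2)))"
proof -
  define S where "S = {\<omega> \<in> space M. lambda_min (emp_gram w \<phi> n (xs \<omega>)) \<ge> 1 - \<delta>}"
  define P where "P = measure M S"
  have P_pos: "P > 0" using S_pos by (simp add: P_def S_def)
  have S_sets: "S \<in> sets M" using P_pos measure_notin_sets[of S M] by (auto simp: P_def)
  have emS: "emeasure M S = ennreal P"
  proof -
    interpret prob_space M by (rule M_prob)
    show ?thesis by (simp add: P_def emeasure_eq_measure)
  qed
  have d1: "1 - \<delta> > 0" using delta by simp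
  have quad: "(1 - \<delta>) * (c \<bullet> c) \<le> c \<bullet> (emp_gram w \<phi> n (xs \<omega>) *v c)" if "\<omega> \<in> S" for \<omega> c
  proof -
    have "(1 - \<delta>) * (c \<bullet> c) \<le> lambda_min (emp_gram w \<phi> n (xs \<omega>)) * (c \<bullet> c)"
      using that by (intro mult_right_mono) (auto simp: S_def)
    also have "\<dots> \<le> c \<bullet> (emp_gram w \<phi> n (xs \<omega>) *v c)"
      unfolding lambda_min_def by (rule lambda_min_quad) (rule gram_sym)
    finally show ?thesis .
  qed
  have pd: "c \<bullet> (emp_gram w \<phi> n (xs \<omega>) *v c) > 0" if "\<omega> \<in> S" "c \<noteq> 0" for \<omega> c
  proof -
    have "0 < (1 - \<delta>) * (c \<bullet> c)" using d1 that(2) by simp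
    then show ?thesis using quad[OF that(1), of c] by linarith
  qed
  have proj: "\<exists>c. emp_gram w \<phi> n (xs \<omega>) *v c = bvec w \<phi> n (xs \<omega>) h \<and> wls_proj w \<phi> n (xs \<omega>) h = vm_elem \<phi> c"
    if oS: "\<omega> \<in> S" for \<omega> h
  proof -
    obtain c where c: "emp_gram w \<phi> n (xs \<omega>) *v c = bvec w \<phi> n (xs \<omega>) h"
      using sol_exists[of w \<phi> n "xs \<omega>"] pd[OF oS] by blast
    then show ?thesis using wls_char[OF w_pos pd[OF oS] c] by blast
  qed
  have cbound: "c \<bullet> c \<le> inverse (1 - \<delta>) * ip w n (xs \<omega>) h h"
    if "\<omega> \<in> S" "emp_gram w \<phi> n (xs \<omega>) *v c = bvec w \<phi> n (xs \<omega>) h" for \<omega> c h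
  proof -
    have "(1 - \<delta>) * (c \<bullet> c) \<le> ip w n (xs \<omega>) h h"
      using quad[OF that(1), of c] sol_bound[OF w_pos that(2)] by linarith
    then show ?thesis using d1 by (simp add: field_simps)
  qed
  have Eip: "(\<integral>\<^sup>+\<omega>. ennreal (ip w n (xs \<omega>) h h) \<partial>M) \<le> ennreal (\<beta> * (\<integral>x. (h x)\<^sup>2 \<partial>\<mu>))"
    if "h \<in> borel_measurable \<mu>" "integrable \<mu> (\<lambda>x. (h x)\<^sup>2)" for h
    by (rule E_ip[OF w_meas w_pos xs_meas wt_meas wt_nonneg marginals beta_pos wt_le that])
  have Eip2: "(\<integral>\<^sup>+\<omega>. ennreal (inverse (1 - \<delta>) * ip w n (xs \<omega>) h h) \<partial>M) \<le> ennreal (inverse (1 - \<delta>) * \<beta> * (\<integral>x. (h x)\<^sup>2 \<partial>\<mu>))"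
    if "h \<in> borel_measurable \<mu>" "integrable \<mu> (\<lambda>x. (h x)\<^sup>2)" for h
  proof -
    have "(\<integral>\<^sup>+\<omega>. ennreal (inverse (1 - \<delta>) * ip w n (xs \<omega>) h h) \<partial>M) = (\<integral>\<^sup>+\<omega>. ennreal (inverse (1 - \<delta>)) * ennreal (ip w n (xs \<omega>) h h) \<partial>M)"
      using d1 ip_nonneg[of w, OF w_pos] by (intro nn_integral_cong) (simp add: ennreal_mult)
    also have "\<dots> = ennreal (inverse (1 - \<delta>)) * (\<integral>\<^sup>+\<omega>. ennreal (ip w n (xs \<omega>) h h) \<partial>M)"
      using ip_meas[OF w_meas xs_meas that(1)] by (subst nn_integral_cmult) auto
    also have "\<dots> \<le> ennreal (inverse (1 - \<delta>)) * ennreal (\<beta> * (\<integral>x. (h x)\<^sup>2 \<partial>\<mu>))"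
      by (intro mult_left_mono Eip that) auto
    also have "\<dots> = ennreal (inverse (1 - \<delta>) * \<beta> * (\<integral>x. (h x)\<^sup>2 \<partial>\<mu>))"
      using d1 beta_pos by (simp add: ennreal_mult[symmetric] mult.assoc)
    finally show ?thesis .
  qed
  have part1: "(\<integral>\<^sup>+\<omega>\<in>S. ennreal ((l2norm \<mu> (wls_proj w \<phi> n (xs \<omega>) f))\<^sup>2) \<partial>M) / ennreal P
      \<le> ennreal (inverse P * inverse (1 - \<delta>) * \<beta> * (l2norm \<mu> f)\<^sup>2)"
  proof -
    have "(\<integral>\<^sup>+\<omega>\<in>S. ennreal ((l2norm \<mu> (wls_proj w \<phi> n (xs \<omega>) f))\<^sup>2) \<partial>M)
        \<le> (\<integral>\<^sup>+\<omega>. ennreal (inverse (1 - \<delta>) * ip w n (xs \<omega>) f f) \<partial>M)"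
    proof (rule nn_integral_mono)
      fix \<omega>
      show "ennreal ((l2norm \<mu> (wls_proj w \<phi> n (xs \<omega>) f))\<^sup>2) * indicator S \<omega> \<le> ennreal (inverse (1 - \<delta>) * ip w n (xs \<omega>) f f)"
      proof (cases "\<omega> \<in> S")
        case True
        obtain c where c: "emp_gram w \<phi> n (xs \<omega>) *v c = bvec w \<phi> n (xs \<omega>) f" "wls_proj w \<phi> n (xs \<omega>) f = vm_elem \<phi> c"
          using proj[OF True] by blast
        have "(l2norm \<mu> (wls_proj w \<phi> n (xs \<omega>) f))\<^sup>2 = c \<bullet> c"
          using c(2) l2_vm[OF phi_meas phi_L2 phi_orth] by simp
        then show ?thesis using True cbound[OF True c(1)] by (simp add: ennreal_leI)
      qed simp
    qed
    also have "\<dots> \<le> ennreal (inverse (1 - \<delta>) * \<beta> * (\<integral>x. (f x)\<^sup>2 \<partial>\<mu>))"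
      by (rule Eip2[OF f_meas f_L2])
    finally have "(\<integral>\<^sup>+\<omega>\<in>S. ennreal ((l2norm \<mu> (wls_proj w \<phi> n (xs \<omega>) f))\<^sup>2) \<partial>M) / ennreal P
        \<le> ennreal (inverse (1 - \<delta>) * \<beta> * (\<integral>x. (f x)\<^sup>2 \<partial>\<mu>)) / ennreal P"
      by (rule divide_right_mono_ennreal)
    also have "\<dots> = ennreal (inverse P * inverse (1 - \<delta>) * \<beta> * (l2norm \<mu> f)\<^sup>2)"
      using P_pos d1 beta_pos by (subst divide_ennreal) (auto simp: l2norm_sq field_simps)
    finally show ?thesis .
  qed
  define c0 where "c0 = (\<chi> j. \<integral>x. f x * \<phi> j x \<partial>\<mu>)"
  define u where "u x = f x - vm_elem \<phi> c0 x" for x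
  define D where "D = (\<integral>x. (u x)\<^sup>2 \<partial>\<mu>)"
  have vm0_meas: "vm_elem \<phi> c0 \<in> borel_measurable \<mu>" by (rule vm_meas[OF phi_meas])
  have u_meas: "u \<in> borel_measurable \<mu>" unfolding u_def using f_meas vm0_meas by measurable
  have u_L2: "integrable \<mu> (\<lambda>x. (u x)\<^sup>2)"
    unfolding u_def by (rule diff_L2[OF f_meas vm0_meas f_L2 vm_L2[OF phi_meas phi_L2]])
  have u_orth: "(\<integral>x. u x * \<phi> j x \<partial>\<mu>) = 0" for j
  proof -
    have i1: "integrable \<mu> (\<lambda>x. f x * \<phi> j x)" by (rule L2_prod[OF f_meas phi_meas f_L2 phi_L2])
    have i2: "integrable \<mu> (\<lambda>x. vm_elem \<phi> c0 x * \<phi> j x)"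
      by (rule L2_prod[OF vm0_meas phi_meas vm_L2[OF phi_meas phi_L2] phi_L2])
    have "(\<integral>x. vm_elem \<phi> c0 x * \<phi> j x \<partial>\<mu>) = (\<integral>x. (\<Sum>k\<in>UNIV. c0$k * (\<phi> k x * \<phi> j x)) \<partial>\<mu>)"
      by (simp add: vm_elem_def sum_distrib_right mult.assoc)
    also have "\<dots> = (\<Sum>k\<in>UNIV. c0$k * (if k = j then 1 else 0))"
      by (subst Bochner_Integration.integral_sum)
         (auto intro!: integrable_mult_right L2_prod phi_meas phi_L2 simp: phi_orth)
    also have "\<dots> = c0$j" by (simp add: if_distrib cong: if_cong)
    finally have "(\<integral>x. vm_elem \<phi> c0 x * \<phi> j x \<partial>\<mu>) = c0$j" .
    moreover have "(\<integral>x. u x * \<phi> j x \<partial>\<mu>) = (\<integral>x. f x * \<phi> j x \<partial>\<mu>) - (\<integral>x. vm_elem \<phi> c0 x * \<phi> j x \<partial>\<mu>)"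
      using i1 i2 by (simp add: u_def left_diff_distrib)
    ultimately show ?thesis by (simp add: c0_def)
  qed
  have shift: "(l2norm \<mu> (\<lambda>x. f x - vm_elem \<phi> c x))\<^sup>2 = D + (c - c0) \<bullet> (c - c0)" for c
  proof -
    have "(\<lambda>x. f x - vm_elem \<phi> c x) = (\<lambda>x. u x - vm_elem \<phi> (c - c0) x)"
      by (simp add: u_def vm_diff)
    then show ?thesis
      using L2_identity[OF phi_meas phi_L2 phi_orth u_meas u_L2 u_orth, of "c - c0"]
      by (simp add: l2norm_sq D_def)
  qed
  have D_nn: "D \<ge> 0" unfolding D_def by simp
  have INF_eq: "(INF c. (l2norm \<mu> (\<lambda>x. f x - vm_elem \<phi> c x))\<^sup>2) = D"
  proof (rule antisym)
    show "(INF c. (l2norm \<mu> (\<lambda>x. f x - vm_elem \<phi> c x))\<^sup>2) \<le> D"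
      by (rule cINF_lower2[of _ _ c0]) (auto simp: shift D_nn intro!: bdd_belowI[of _ 0] add_nonneg_nonneg)
    show "D \<le> (INF c. (l2norm \<mu> (\<lambda>x. f x - vm_elem \<phi> c x))\<^sup>2)"
      by (rule cINF_greatest) (auto simp: shift)
  qed
  have part2: "(\<integral>\<^sup>+\<omega>\<in>S. ennreal ((l2norm \<mu> (\<lambda>x. f x - wls_proj w \<phi> n (xs \<omega>) f x))\<^sup>2) \<partial>M) / ennreal P
      \<le> ennreal ((1 + inverse P * inverse (1 - \<delta>) * \<beta>) * D)"
  proof -
    have "(\<integral>\<^sup>+\<omega>\<in>S. ennreal ((l2norm \<mu> (\<lambda>x. f x - wls_proj w \<phi> n (xs \<omega>) f x))\<^sup>2) \<partial>M)
        \<le> (\<integral>\<^sup>+\<omega>. ennreal D * indicator S \<omega> + ennreal (inverse (1 - \<delta>) * ip w n (xs \<omega>) u u) \<partial>M)"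
    proof (rule nn_integral_mono)
      fix \<omega>
      show "ennreal ((l2norm \<mu> (\<lambda>x. f x - wls_proj w \<phi> n (xs \<omega>) f x))\<^sup>2) * indicator S \<omega>
          \<le> ennreal D * indicator S \<omega> + ennreal (inverse (1 - \<delta>) * ip w n (xs \<omega>) u u)"
      proof (cases "\<omega> \<in> S")
        case True
        obtain cf where cf: "emp_gram w \<phi> n (xs \<omega>) *v cf = bvec w \<phi> n (xs \<omega>) f" "wls_proj w \<phi> n (xs \<omega>) f = vm_elem \<phi> cf"
          using proj[OF True] by blast
        have "emp_gram w \<phi> n (xs \<omega>) *v (cf - c0) = bvec w \<phi> n (xs \<omega>) u"
          using cf(1) bvec_diff[of w \<phi> n "xs \<omega>" f "vm_elem \<phi> c0"]
          by (simp add: matrix_vector_mult_diff_distrib gram_mult u_def[abs_def])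
        then have eb: "(cf - c0) \<bullet> (cf - c0) \<le> inverse (1 - \<delta>) * ip w n (xs \<omega>) u u"
          by (rule cbound[OF True])
        have "(l2norm \<mu> (\<lambda>x. f x - wls_proj w \<phi> n (xs \<omega>) f x))\<^sup>2 = D + (cf - c0) \<bullet> (cf - c0)"
          using cf(2) shift[of cf] by simp
        then have "(l2norm \<mu> (\<lambda>x. f x - wls_proj w \<phi> n (xs \<omega>) f x))\<^sup>2 \<le> D + inverse (1 - \<delta>) * ip w n (xs \<omega>) u u"
          using eb by simp
        then have "ennreal ((l2norm \<mu> (\<lambda>x. f x - wls_proj w \<phi> n (xs \<omega>) f x))\<^sup>2) \<le> ennreal (D + inverse (1 - \<delta>) * ip w n (xs \<omega>) u u)"
          by (rule ennreal_leI)
        also have "\<dots> = ennreal D + ennreal (inverse (1 - \<delta>) * ip w n (xs \<omega>) u u)"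
          using D_nn d1 ip_nonneg[of w, OF w_pos] by (intro ennreal_plus) auto
        finally show ?thesis using True by simp
      qed simp
    qed
    also have "\<dots> = ennreal D * emeasure M S + (\<integral>\<^sup>+\<omega>. ennreal (inverse (1 - \<delta>) * ip w n (xs \<omega>) u u) \<partial>M)"
      using S_sets ip_meas[OF w_meas xs_meas u_meas]
      by (subst nn_integral_add) (auto simp: nn_integral_cmult_indicator)
    also have "\<dots> \<le> ennreal D * ennreal P + ennreal (inverse (1 - \<delta>) * \<beta> * D)"
      unfolding emS D_def by (rule add_left_mono) (rule Eip2[OF u_meas u_L2])
    also have "\<dots> = ennreal (D * P + inverse (1 - \<delta>) * \<beta> * D)"
    proof -
      have "ennreal D * ennreal P = ennreal (D * P)" using D_nn P_pos by (simp add: ennreal_mult)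
      moreover have "0 \<le> inverse (1 - \<delta>) * \<beta> * D" using D_nn d1 beta_pos by simp
      moreover have "0 \<le> D * P" using D_nn P_pos by simp
      ultimately show ?thesis by (simp add: ennreal_plus)
    qed
    finally have "(\<integral>\<^sup>+\<omega>\<in>S. ennreal ((l2norm \<mu> (\<lambda>x. f x - wls_proj w \<phi> n (xs \<omega>) f x))\<^sup>2) \<partial>M) / ennreal P
        \<le> ennreal (D * P + inverse (1 - \<delta>) * \<beta> * D) / ennreal P"
      by (rule divide_right_mono_ennreal)
    also have "\<dots> = ennreal ((1 + inverse P * inverse (1 - \<delta>) * \<beta>) * D)"
    proof -
      have nn: "0 \<le> D * P + inverse (1 - \<delta>) * \<beta> * D" using P_pos d1 beta_pos D_nn by simp
      have "(D * P + inverse (1 - \<delta>) * \<beta> * D) / P = (1 + inverse P * inverse (1 - \<delta>) * \<beta>) * D"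
        using P_pos d1 by (simp add: field_simps)
      then show ?thesis by (simp add: divide_ennreal[OF nn P_pos])
    qed
    finally show ?thesis .
  qed
  show ?thesis using part1 part2 unfolding S_def P_def INF_eq by simp
qed

end
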